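(* Let $X$ be a $T_1$ topological space which is Čech complete (in the sense defined in the context), and let $f:X\to X$ be a topological contraction. Then $f$ has a unique fixed point.
   Context: A topological space $X$ (not assumed Tychonoff) is called Čech complete if there exists a sequence $(\mathcal{U}_i)_{i\in\mathbb{N}}$ of open covers of $X$ such that whenever $(F_m)_m$ is a centered sequence of closed subsets of $X$ (every finite subfamily has nonempty intersection) with the property that for each $i$ there is $m_i$ such that $F_{m_i}$ is contained in some member of $\mathcal{U}_i$, the intersection $\bigcap_m F_m$ is nonempty. A mapping $f:X\to X$ is closed if it maps closed sets to closed sets (continuity is not assumed). A mapping $f:X\to X$ is a topological contraction if $f$ is closed and for every open cover $\mathcal{U}$ of $X$ there exist $n\in\mathbb{N}$ and $U\in\mathcal{U}$ with $f^n[X]\subseteq U$, where $f^n$ is the $n$-fold iterate of $f$. *)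

theory Defs
  imports "HOL-Analysis.Analysis"
begin

definition open_cover :: "'a topology \<Rightarrow> 'a set set \<Rightarrow> bool" where
  "open_cover X \<U> \<longleftrightarrow> (\<forall>U\<in>\<U>. openin X U) \<and> \<Union>\<U> = topspace X"

definition centered_seq :: "(nat \<Rightarrow> 'a set) \<Rightarrow> bool" where
  "centered_seq F \<longleftrightarrow> (\<forall>K. finite K \<and> K \<noteq> {} \<longrightarrow> \<Inter>(F ` K) \<noteq> {})"

definition cech_complete :: "'a topology \<Rightarrow> bool" where
  "cech_complete X \<longleftrightarrow>
     (\<exists>\<U> :: nat \<Rightarrow> 'a set set.
        (\<forall>i. open_cover X (\<U> i)) \<and>
        (\<forall>F :: nat \<Rightarrow> 'a set.
           (\<forall>m. closedin X (F m)) \<and> centered_seq F \<and>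
           (\<forall>i. \<exists>m. \<exists>U\<in>\<U> i. F m \<subseteq> U)
           \<longrightarrow> \<Inter>(range F) \<noteq> {}))"

definition topological_contraction :: "'a topology \<Rightarrow> ('a \<Rightarrow> 'a) \<Rightarrow> bool" where
  "topological_contraction X f \<longleftrightarrow>
     f \<in> topspace X \<rightarrow> topspace X \<and> closed_map X X f \<and>
     (\<forall>\<U>. open_cover X \<U> \<longrightarrow> (\<exists>n::nat. \<exists>U\<in>\<U>. (f ^^ n) ` topspace X \<subseteq> U))"

end

theory Submission
  imports Defs
begin

theorem theorem1:
  fixes X :: "'a topology" and f :: "'a \<Rightarrow> 'a"
  assumes "t1_space X" and "cech_complete X" and "topological_contraction X f"
  shows "\<exists>!x. x \<in> topspace X \<and> f x = x"
proof -
  define T where "T = topspace X"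
  define K where "K = (\<lambda>n. (f ^^ n) ` T)"
  have fT: "f \<in> T \<rightarrow> T" and cm: "closed_map X X f"
    and con: "\<And>\<U>. open_cover X \<U> \<Longrightarrow> \<exists>n::nat. \<exists>U\<in>\<U>. K n \<subseteq> U"
    using assms(3) unfolding topological_contraction_def K_def T_def by auto
  have Tne: "T \<noteq> {}"
  proof
    assume "T = {}"
    then have "open_cover X {}" unfolding open_cover_def T_def by auto
    then show False using con by blast
  qed
  have KSuc: "K (Suc n) = f ` K n" for n
    unfolding K_def by (simp add: image_image)
  have KsubT: "K n \<subseteq> T" for n
  proof (induction n)
    case 0 then show ?case by (simp add: K_def)
  next
    case (Suc n) then show ?case using fT KSuc by auto
  qed
  have Kdec: "K (Suc n) \<subseteq> K n" for n
  proof (induction n)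
    case 0 then show ?case using fT KSuc by (auto simp: K_def)
  next
    case (Suc n) then show ?case using KSuc by (metis image_mono)
  qed
  have Kmono: "m \<le> n \<Longrightarrow> K n \<subseteq> K m" for m n
    using Kdec by (metis decseq_Suc_iff decseq_def)
  have Kne: "K n \<noteq> {}" for n
    unfolding K_def using Tne by auto
  have Kcl: "closedin X (K n)" for n
  proof (induction n)
    case 0 then show ?case by (simp add: K_def T_def)
  next
    case (Suc n) then show ?case using KSuc cm by (simp add: closed_map_def)
  qed
  have cent: "centered_seq K"
    unfolding centered_seq_def
  proof (intro allI impI)
    fix J :: "nat set" assume J: "finite J \<and> J \<noteq> {}"
    have "\<forall>j\<in>J. K (Max J) \<subseteq> K j" using J Kmono Max_ge by metis
    then have "K (Max J) \<subseteq> \<Inter>(K ` J)" by blast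
    then show "\<Inter>(K ` J) \<noteq> {}" using Kne by blast
  qed
  obtain \<U> :: "nat \<Rightarrow> 'a set set" where U1: "\<And>i. open_cover X (\<U> i)" and
    U2: "\<And>F. (\<forall>m. closedin X (F m)) \<and> centered_seq F \<and>
           (\<forall>i. \<exists>m. \<exists>U\<in>\<U> i. F m \<subseteq> U) \<Longrightarrow> \<Inter>(range F) \<noteq> {}"
    for F :: "nat \<Rightarrow> 'a set"
    using assms(2) unfolding cech_complete_def by blast
  have "\<Inter>(range K) \<noteq> {}"
  proof (rule U2, intro conjI allI)
    show "closedin X (K m)" for m by (rule Kcl)
    show "centered_seq K" by (rule cent)
    show "\<exists>m. \<exists>U\<in>\<U> i. K m \<subseteq> U" for i using con[OF U1[of i]] by blast
  qed
  then obtain a where a: "\<And>n. a \<in> K n" by blast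
  have sep: "\<exists>n. x \<notin> K n \<or> y \<notin> K n" if "x \<in> T" "y \<in> T" "x \<noteq> y" for x y
  proof -
    have cx: "closedin X {x}" and cy: "closedin X {y}"
      using assms(1) that t1_space_closedin_singleton T_def by metis+
    have "open_cover X {T - {x}, T - {y}}"
      unfolding open_cover_def
    proof
      show "\<forall>U\<in>{T - {x}, T - {y}}. openin X U"
        using cx cy by (auto simp: T_def openin_diff)
      show "\<Union> {T - {x}, T - {y}} = topspace X" using that(3) by (auto simp: T_def)
    qed
    from con[OF this] obtain n U where nU: "U \<in> {T - {x}, T - {y}}" "K n \<subseteq> U" by (elim exE bexE)
    from nU(1) have "U = T - {x} \<or> U = T - {y}" by simp
    then show ?thesis using nU(2) by blast
  qed
  have aT: "a \<in> T" using a[of 0] by (simp add: K_def)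
  have faK: "f a \<in> K n" for n
    using a[of n] KSuc[of n] Kdec[of n] by auto
  have faT: "f a \<in> T" using aT fT by auto
  have fa: "f a = a"
  proof (rule ccontr)
    assume "f a \<noteq> a"
    then obtain n where "f a \<notin> K n \<or> a \<notin> K n" using sep[OF faT aT] by blast
    then show False using faK a by blast
  qed
  have fixK: "x \<in> K n" if "x \<in> T" "f x = x" for x n
  proof (induction n)
    case 0 then show ?case using that by (simp add: K_def)
  next
    case (Suc n) then show ?case using KSuc that by (metis image_eqI)
  qed
  show ?thesis
  proof (rule ex1I[of _ a])
    show "a \<in> topspace X \<and> f a = a" using aT fa T_def by simp
  next
    fix x assume "x \<in> topspace X \<and> f x = x"
    then have x: "x \<in> T" "f x = x" using T_def by auto
    show "x = a"
    proof (rule ccontr)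
      assume "x \<noteq> a"
      then obtain n where "x \<notin> K n \<or> a \<notin> K n" using sep[OF x(1) aT] by blast
      then show False using fixK[OF x] a by blast
    qed
  qed
qed

end
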